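(* Let $e,f\in\mathbb{N}^I$ and $d=e+f$. Then: (a) $w_{e,f}\cdot\rho-\rho=-2\rho_{f,e}$. (b) The map $\beta\mapsto -w_{f,e}\cdot\beta$ is a bijection from $\mathcal{W}_{f,e}$ onto $\mathcal{W}_{e,f}$.
   Context: Let $Q=(I,E)$ be a symmetric quiver (for all $i,j\in I$ the number of arrows $i\to j$ equals the number of arrows $j\to i$). For $d\in\mathbb{N}^I$ let $R(d)=\bigoplus_{a\in E}\mathrm{Hom}(\mathbb{C}^{d_{s(a)}},\mathbb{C}^{d_{t(a)}})$ with $G(d)=\prod_i GL(d_i)$, and let $M=\bigoplus_{i\in I,1\le j\le d_i}\mathbb{Z}\beta^i_j$ be the weight lattice of the diagonal torus. The Weyl group $\mathfrak{S}_d=\prod_{a\in I}\mathfrak{S}_{d_a}$ acts on $M$ by $w\cdot\beta^a_j=\beta^a_{w^a(j)}$ for $w=(w^a)_{a\in I}$. Positive roots are $\beta^a_i-\beta^a_j$ with $i<j$, and $\rho$ is half their sum. Let $\mathcal{W}$ be the multiset of weights of $R(d)$ (for each arrow $a:i\to j$ and $x\le d_i$, $y\le d_j$, the weight $\beta^j_y-\beta^i_x$). For $e,f\in\mathbb{N}^I$ with $e+f=d$, let $\lambda_{e,f}$ be an antidominant cocharacter of the torus of $SG(d)$ associated with the ordered partition $(e,f)$: $\langle\lambda_{e,f},\beta^a_j\rangle=x$ for $j\le e^a$ and $=y$ for $j>e^a$, with fixed reals/integers $x<y$ (normalized so that $\lambda_{e,f}$ lies in $SG(d)$); define $\lambda_{f,e}$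 similarly with the blocks of sizes $f^a$ then $e^a$. Let $\mathcal{W}_{e,f}:=\{\beta\in\mathcal{W}:\langle\lambda_{e,f},\beta\rangle<0\}$ and let $\rho_{e,f}$ be half the sum of the positive roots $\alpha$ with $\langle\lambda_{e,f},\alpha\rangle<0$ (similarly $\mathcal{W}_{f,e}$, $\rho_{f,e}$). Let $w_{e,f}=(w^a)_{a\in I}\in\mathfrak{S}_d$ with $w^a(i)=i+f^a$ for $1\le i\le e^a$ and $w^a(i)=i-e^a$ for $e^a<i\le e^a+f^a$; $w_{f,e}$ is defined with the roles of $e,f$ exchanged (so $w_{f,e}=w_{e,f}^{-1}$). *)

theory Defs
  imports Complex_Main "HOL-Library.Multiset"
begin

text \<open>Quiver: vertex set I, arrow set E with source/target maps.
  Elements of M (tensored with the reals) are functions on pairs (vertex, index);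
  beta a j is the basis vector.\<close>

definition symmetric_quiver :: "'i set \<Rightarrow> 'e set \<Rightarrow> ('e \<Rightarrow> 'i) \<Rightarrow> ('e \<Rightarrow> 'i) \<Rightarrow> bool" where
  "symmetric_quiver I E src tgt \<longleftrightarrow> finite I \<and> finite E \<and> (\<forall>a\<in>E. src a \<in> I \<and> tgt a \<in> I) \<and>
     (\<forall>i\<in>I. \<forall>j\<in>I. card {a\<in>E. src a = i \<and> tgt a = j} = card {a\<in>E. src a = j \<and> tgt a = i})"

type_synonym 'i weight = "'i \<times> nat \<Rightarrow> real"

definition beta :: "'i \<Rightarrow> nat \<Rightarrow> 'i weight" where
  "beta a j = (\<lambda>q. if q = (a, j) then 1 else 0)"

definition idx :: "'i set \<Rightarrow> ('i \<Rightarrow> nat) \<Rightarrow> ('i \<times> nat) set" where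
  "idx I d = {(a, j). a \<in> I \<and> 1 \<le> j \<and> j \<le> d a}"

text \<open>Pairing of a cocharacter (given by its values on the basis) with a weight.\<close>
definition pair :: "'i set \<Rightarrow> ('i \<Rightarrow> nat) \<Rightarrow> 'i weight \<Rightarrow> 'i weight \<Rightarrow> real" where
  "pair I d lam m = (\<Sum>p\<in>idx I d. lam p * m p)"

text \<open>Action of w = (w^a) of the Weyl group: w . beta a j = beta a (w^a j), extended linearly.\<close>
definition weyl_act :: "'i set \<Rightarrow> ('i \<Rightarrow> nat) \<Rightarrow> ('i \<Rightarrow> nat \<Rightarrow> nat) \<Rightarrow> 'i weight \<Rightarrow> 'i weight" where
  "weyl_act I d w m = (\<lambda>q. \<Sum>p\<in>idx I d. m p * beta (fst p) (w (fst p) (snd p)) q)"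

definition pos_roots :: "'i set \<Rightarrow> ('i \<Rightarrow> nat) \<Rightarrow> ('i \<times> nat \<times> nat) set" where
  "pos_roots I d = {(a, i, j). a \<in> I \<and> 1 \<le> i \<and> i < j \<and> j \<le> d a}"

definition root :: "'i \<times> nat \<times> nat \<Rightarrow> 'i weight" where
  "root r = (case r of (a, i, j) \<Rightarrow> (\<lambda>q. beta a i q - beta a j q))"

definition rho :: "'i set \<Rightarrow> ('i \<Rightarrow> nat) \<Rightarrow> 'i weight" where
  "rho I d = (\<lambda>q. (1/2) * (\<Sum>r\<in>pos_roots I d. root r q))"

text \<open>Cocharacter lambda_{e,f} with values x (first e^a indices) and y (remaining).\<close>
definition lam :: "('i \<Rightarrow> nat) \<Rightarrow> real \<Rightarrow> real \<Rightarrow> 'i weight" where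
  "lam e x y = (\<lambda>(a, j). if j \<le> e a then x else y)"

definition rho_part :: "'i set \<Rightarrow> ('i \<Rightarrow> nat) \<Rightarrow> 'i weight \<Rightarrow> 'i weight" where
  "rho_part I d l = (\<lambda>q. (1/2) * (\<Sum>r\<in>{r\<in>pos_roots I d. pair I d l (root r) < 0}. root r q))"

text \<open>Multiset of weights of R(d): for each arrow a : i -> j and x \<le> d_i, y \<le> d_j,
  the weight beta j y - beta i x.\<close>
definition weights :: "'e set \<Rightarrow> ('e \<Rightarrow> 'i) \<Rightarrow> ('e \<Rightarrow> 'i) \<Rightarrow> ('i \<Rightarrow> nat) \<Rightarrow> 'i weight multiset" where
  "weights E src tgt d =
     image_mset (\<lambda>(a, x, y). (\<lambda>q. beta (tgt a) y q - beta (src a) x q))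
       (mset_set {(a, x, y). a \<in> E \<and> 1 \<le> x \<and> x \<le> d (src a) \<and> 1 \<le> y \<and> y \<le> d (tgt a)})"

definition weights_neg :: "'i set \<Rightarrow> 'e set \<Rightarrow> ('e \<Rightarrow> 'i) \<Rightarrow> ('e \<Rightarrow> 'i) \<Rightarrow> ('i \<Rightarrow> nat) \<Rightarrow> 'i weight \<Rightarrow> 'i weight multiset" where
  "weights_neg I E src tgt d l = filter_mset (\<lambda>b. pair I d l b < 0) (weights E src tgt d)"

definition wef :: "('i \<Rightarrow> nat) \<Rightarrow> ('i \<Rightarrow> nat) \<Rightarrow> 'i \<Rightarrow> nat \<Rightarrow> nat" where
  "wef e f a i = (if 1 \<le> i \<and> i \<le> e a then i + f a
                  else if e a < i \<and> i \<le> e a + f a then i - e a else i)"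

end

theory Submission
  imports Defs
begin

lemma finite_idx: "finite I \<Longrightarrow> finite (idx I d)"
proof -
  assume "finite I"
  have "idx I d \<subseteq> Sigma I (\<lambda>a. {1..d a})" by (auto simp: idx_def)
  thus ?thesis using \<open>finite I\<close> by (meson finite_SigmaI finite_atLeastAtMost finite_subset)
qed

lemma finite_pos_roots: "finite I \<Longrightarrow> finite (pos_roots I d)"
proof -
  assume "finite I"
  have "pos_roots I d \<subseteq> Sigma I (\<lambda>a. {1..d a} \<times> {1..d a})" by (auto simp: pos_roots_def)
  thus ?thesis using \<open>finite I\<close> by (meson finite_SigmaI finite_cartesian_product finite_atLeastAtMost finite_subset)
qed

lemma beta_sum: "finite A \<Longrightarrow> (\<Sum>p\<in>A. beta a j p * F p) = (if (a,j) \<in> A then F (a,j) else 0)"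
proof -
  assume fA: "finite A"
  have "(\<Sum>p\<in>A. beta a j p * F p) = (\<Sum>p\<in>A. if (a,j) = p then F (a,j) else 0)"
    by (rule sum.cong) (auto simp: beta_def)
  also have "\<dots> = (if (a,j) \<in> A then F (a,j) else 0)" using fA by (simp add: sum.delta)
  finally show ?thesis .
qed

lemma pair_diff:
  assumes "finite I" "(a,j) \<in> idx I d" "(b,k) \<in> idx I d"
  shows "pair I d l (\<lambda>q. beta a j q - beta b k q) = l (a,j) - l (b,k)"
proof -
  have "pair I d l (\<lambda>q. beta a j q - beta b k q) = (\<Sum>p\<in>idx I d. beta a j p * l p) - (\<Sum>p\<in>idx I d. beta b k p * l p)"
    unfolding pair_def by (simp add: algebra_simps sum_subtractf)
  thus ?thesis using assms by (simp add: beta_sum finite_idx)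
qed

lemma weyl_diff:
  assumes "finite I" "(a,j) \<in> idx I d" "(b,k) \<in> idx I d"
  shows "weyl_act I d w (\<lambda>q. beta a j q - beta b k q) q = beta a (w a j) q - beta b (w b k) q"
proof -
  have "weyl_act I d w (\<lambda>q. beta a j q - beta b k q) q =
     (\<Sum>p\<in>idx I d. beta a j p * beta (fst p) (w (fst p) (snd p)) q) - (\<Sum>p\<in>idx I d. beta b k p * beta (fst p) (w (fst p) (snd p)) q)"
    unfolding weyl_act_def by (simp add: algebra_simps sum_subtractf)
  thus ?thesis using assms by (simp add: beta_sum finite_idx)
qed

lemma weyl_pt:
  assumes "finite I" "b \<in> I" "1 \<le> i0" "i0 \<le> d b" "w b i0 = k"
    "\<And>i. 1 \<le> i \<Longrightarrow> i \<le> d b \<Longrightarrow> w b i = k \<Longrightarrow> i = i0"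
  shows "weyl_act I d w m (b,k) = m (b,i0)"
proof -
  have "weyl_act I d w m (b,k) = (\<Sum>p\<in>idx I d. if p = (b,i0) then m p else 0)"
    unfolding weyl_act_def
  proof (rule sum.cong[OF refl])
    fix p assume p: "p \<in> idx I d"
    obtain a i where pe: "p = (a,i)" by force
    show "m p * beta (fst p) (w (fst p) (snd p)) (b, k) = (if p = (b, i0) then m p else 0)"
    proof -
      have iff: "((b,k) = (a, w a i)) = ((a,i) = (b,i0))"
      proof
        assume h: "(b,k) = (a, w a i)"
        hence ab: "a = b" and wk: "w b i = k" by auto
        have "1 \<le> i" "i \<le> d b" using p ab unfolding pe by (auto simp: idx_def)
        hence "i = i0" using assms(6) wk by blast
        thus "(a,i) = (b,i0)" using ab by simp
      next
        assume "(a,i) = (b,i0)" thus "(b,k) = (a, w a i)" using assms(5) by auto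
      qed
      show ?thesis unfolding pe fst_conv snd_conv beta_def iff by simp
    qed
  qed
  also have "\<dots> = m (b,i0)"
  proof -
    have "(b,i0) \<in> idx I d" using assms(2-4) by (simp add: idx_def)
    thus ?thesis by (simp add: sum.delta' finite_idx[OF assms(1)])
  qed
  finally show ?thesis .
qed

lemma weyl_out:
  assumes "finite I" "(b,k) \<notin> idx I d"
    "\<And>a i. a \<in> I \<Longrightarrow> 1 \<le> i \<Longrightarrow> i \<le> d a \<Longrightarrow> 1 \<le> w a i \<and> w a i \<le> d a"
  shows "weyl_act I d w m (b,k) = 0"
  unfolding weyl_act_def
proof (rule sum.neutral, rule ballI)
  fix p assume p: "p \<in> idx I d"
  obtain a i where pe: "p = (a,i)" by force
  show "m p * beta (fst p) (w (fst p) (snd p)) (b, k) = 0"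
    using p assms(2) assms(3)[of a i] unfolding pe by (auto simp: beta_def idx_def)
qed

lemma root_sum:
  assumes "finite A"
  shows "(\<Sum>r\<in>A. root r q) = real (card {r\<in>A. (fst r, fst (snd r)) = q}) - real (card {r\<in>A. (fst r, snd (snd r)) = q})"
proof -
  have "(\<Sum>r\<in>A. root r q) = (\<Sum>r\<in>A. (if (fst r, fst (snd r)) = q then 1 else 0) - (if (fst r, snd (snd r)) = q then 1 else 0))"
    by (rule sum.cong) (auto simp: root_def beta_def split: prod.splits)
  also have "\<dots> = real (card {r\<in>A. (fst r, fst (snd r)) = q}) - real (card {r\<in>A. (fst r, snd (snd r)) = q})"
    using assms by (simp add: sum_subtractf sum.If_cases Collect_conj_eq)
  finally show ?thesis .
qed


lemma lam_neg: "x < y \<Longrightarrow> (lam f x y (c,j) - lam f x y (c',j') < 0) \<longleftrightarrow> (j \<le> f c \<and> f c' < j')"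
  by (auto simp: lam_def)

lemma rho_val:
  assumes "finite I"
  shows "rho I d (b,k) = (if (b,k) \<in> idx I d then (real (d b) + 1 - 2 * real k) / 2 else 0)"
proof (cases "(b,k) \<in> idx I d")
  case True
  hence b: "b \<in> I" "1 \<le> k" "k \<le> d b" by (auto simp: idx_def)
  have s1: "{r\<in>pos_roots I d. (fst r, fst (snd r)) = (b,k)} = (\<lambda>j. (b,k,j)) ` {k<..d b}"
    using b by (auto simp: pos_roots_def)
  have s2: "{r\<in>pos_roots I d. (fst r, snd (snd r)) = (b,k)} = (\<lambda>i. (b,i,k)) ` {1..<k}"
    using b by (auto simp: pos_roots_def)
  have c1: "card ((\<lambda>j. (b,k,j)) ` {k<..d b}) = d b - k" by (subst card_image) (auto simp: inj_on_def)
  have c2: "card ((\<lambda>i. (b,i,k)) ` {1..<k}) = k - 1" by (subst card_image) (auto simp: inj_on_def)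
  show ?thesis using True b
    unfolding rho_def root_sum[OF finite_pos_roots[OF assms]] s1 s2 c1 c2
    by (simp add: of_nat_diff field_simps)
next
  case False
  have s1: "{r\<in>pos_roots I d. (fst r, fst (snd r)) = (b,k)} = {}"
    using False by (auto simp: pos_roots_def idx_def)
  have s2: "{r\<in>pos_roots I d. (fst r, snd (snd r)) = (b,k)} = {}"
    using False by (auto simp: pos_roots_def idx_def)
  show ?thesis using False
    unfolding rho_def root_sum[OF finite_pos_roots[OF assms]] s1 s2 by simp
qed

lemma pair_root:
  assumes "finite I" "(a,i,j) \<in> pos_roots I d"
  shows "pair I d l (root (a,i,j)) = l (a,i) - l (a,j)"
proof -
  have "root (a,i,j) = (\<lambda>q. beta a i q - beta a j q)" by (simp add: root_def)
  moreover have "(a,i) \<in> idx I d" "(a,j) \<in> idx I d" using assms(2) by (auto simp: idx_def pos_roots_def)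
  ultimately show ?thesis using pair_diff[OF assms(1)] by simp
qed

lemma rho_part_val:
  fixes I :: "'i set"
  assumes "finite I" "x < y" "d = (\<lambda>a. e a + f a)"
  shows "rho_part I d (lam f x y) (b,k) =
    (if (b,k) \<in> idx I d then (if k \<le> f b then real (e b) / 2 else - real (f b) / 2) else 0)"
proof -
  have P: "{r\<in>pos_roots I d. pair I d (lam f x y) (root r) < 0} =
     {(a,i,j). a \<in> I \<and> 1 \<le> i \<and> i \<le> f a \<and> f a < j \<and> j \<le> d a}" (is "?L = ?R")
  proof -
    have key: "(a,i,j) \<in> ?L \<longleftrightarrow> (a,i,j) \<in> ?R" for a i j
    proof (cases "(a,i,j) \<in> pos_roots I d")
      case True
      have "pair I d (lam f x y) (root (a,i,j)) < 0 \<longleftrightarrow> i \<le> f a \<and> f a < j"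
        unfolding pair_root[OF assms(1) True] by (simp only: lam_neg[OF assms(2)])
      then show ?thesis using True by (auto simp: pos_roots_def)
    next
      case False
      then show ?thesis by (auto simp: pos_roots_def)
    qed
    show ?thesis
    proof (rule set_eqI)
      fix r :: "'i \<times> nat \<times> nat"
      obtain a i j where re: "r = (a,i,j)" by (cases r) auto
      show "r \<in> ?L \<longleftrightarrow> r \<in> ?R" unfolding re by (rule key)
    qed
  qed
  have fin: "finite ?L" using finite_pos_roots[OF assms(1)] by simp
  have finR: "finite ?R" using fin P by simp
  have val: "rho_part I d (lam f x y) (b,k) = (1/2) * (real (card {r\<in>?R. (fst r, fst (snd r)) = (b,k)}) - real (card {r\<in>?R. (fst r, snd (snd r)) = (b,k)}))"
    unfolding rho_part_def P root_sum[OF finR] by simp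
  show ?thesis
  proof (cases "(b,k) \<in> idx I d")
    case True
    hence b: "b \<in> I" "1 \<le> k" "k \<le> d b" by (auto simp: idx_def)
    show ?thesis
    proof (cases "k \<le> f b")
      case True
      have s1: "{r\<in>?R. (fst r, fst (snd r)) = (b,k)} = (\<lambda>j. (b,k,j)) ` {f b<..d b}"
        using b True by auto
      have s2: "{r\<in>?R. (fst r, snd (snd r)) = (b,k)} = {}"
        using b True by auto
      have c1: "card ((\<lambda>j. (b,k,j)) ` {f b<..d b}) = d b - f b" by (subst card_image) (auto simp: inj_on_def)
      have de: "d b - f b = e b" using assms(3) by simp
      show ?thesis using True \<open>(b,k) \<in> idx I d\<close> unfolding val s1 s2 c1 de by simp
    next
      case False
      have s1: "{r\<in>?R. (fst r, fst (snd r)) = (b,k)} = {}"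
        using b False by auto
      have s2: "{r\<in>?R. (fst r, snd (snd r)) = (b,k)} = (\<lambda>i. (b,i,k)) ` {1..f b}"
        using b False by auto
      have c2: "card ((\<lambda>i. (b,i,k)) ` {1..f b}) = f b" by (subst card_image) (auto simp: inj_on_def)
      show ?thesis using False b \<open>(b,k) \<in> idx I d\<close> unfolding val s1 s2 c2 by simp
    qed
  next
    case False
    have s1: "{r\<in>?R. (fst r, fst (snd r)) = (b,k)} = {}" using False by (auto simp: idx_def)
    have s2: "{r\<in>?R. (fst r, snd (snd r)) = (b,k)} = {}" using False by (auto simp: idx_def)
    show ?thesis using False unfolding val s1 s2 by simp
  qed
qed

lemma part_a:
  fixes I :: "'i set"
  assumes "finite I" "x < y" "d = (\<lambda>a. e a + f a)"
  shows "(\<lambda>q. weyl_act I d (wef e f) (rho I d) q - rho I d q) = (\<lambda>q. - 2 * rho_part I d (lam f x y) q)"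
proof (rule ext)
  fix q :: "'i \<times> nat"
  obtain b k where qe: "q = (b,k)" by force
  show "weyl_act I d (wef e f) (rho I d) q - rho I d q = - 2 * rho_part I d (lam f x y) q"
  proof (cases "(b,k) \<in> idx I d")
    case True
    hence b: "b \<in> I" "1 \<le> k" "k \<le> d b" by (auto simp: idx_def)
    show ?thesis
    proof (cases "k \<le> f b")
      case True
      have "weyl_act I d (wef e f) (rho I d) (b,k) = rho I d (b, k + e b)"
        by (rule weyl_pt[OF assms(1) b(1)]) (use b True assms(3) in \<open>auto simp: wef_def split: if_splits\<close>)
      moreover have "(b, k + e b) \<in> idx I d" using b True assms(3) by (auto simp: idx_def)
      ultimately show ?thesis unfolding qe using True b \<open>(b,k) \<in> idx I d\<close>
        by (simp add: rho_val[OF assms(1)] rho_part_val[OF assms] field_simps)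
    next
      case False
      have "weyl_act I d (wef e f) (rho I d) (b,k) = rho I d (b, k - f b)"
        by (rule weyl_pt[OF assms(1) b(1)]) (use b False assms(3) in \<open>auto simp: wef_def split: if_splits\<close>)
      moreover have "(b, k - f b) \<in> idx I d" using b False assms(3) by (auto simp: idx_def)
      ultimately show ?thesis unfolding qe using False b \<open>(b,k) \<in> idx I d\<close>
        by (simp add: rho_val[OF assms(1)] rho_part_val[OF assms] field_simps of_nat_diff)
    qed
  next
    case False
    have "weyl_act I d (wef e f) (rho I d) (b,k) = 0"
      by (rule weyl_out[OF assms(1) False]) (use assms(3) in \<open>auto simp: wef_def\<close>)
    thus ?thesis unfolding qe using False by (simp add: rho_val[OF assms(1)] rho_part_val[OF assms])
  qed
qed


lemma part_b:
  fixes I :: "'i set" and E :: "'e set"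
  assumes sq: "symmetric_quiver I E src tgt" and d: "d = (\<lambda>a. e a + f a)"
    and xy1: "x1 < y1" and xy2: "x2 < y2"
  shows "image_mset (\<lambda>b. (\<lambda>q. - weyl_act I d (wef f e) b q)) (weights_neg I E src tgt d (lam f x2 y2))
           = weights_neg I E src tgt d (lam e x1 y1)"
proof -
  have fI: "finite I" and fE: "finite E" and st: "\<And>a. a \<in> E \<Longrightarrow> src a \<in> I \<and> tgt a \<in> I"
    using sq by (auto simp: symmetric_quiver_def)
  define g where "g = (\<lambda>(a::'e, x::nat, y::nat). (\<lambda>q. beta (tgt a) y q - beta (src a) x q))"
  define T where "T = {(a, x, y). a \<in> E \<and> 1 \<le> x \<and> x \<le> d (src a) \<and> 1 \<le> y \<and> y \<le> d (tgt a)}"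
  have "T \<subseteq> Sigma E (\<lambda>a. {1..d (src a)} \<times> {1..d (tgt a)})" by (auto simp: T_def)
  hence fT: "finite T" using fE by (meson finite_SigmaI finite_cartesian_product finite_atLeastAtMost finite_subset)
  have W: "weights E src tgt d = image_mset g (mset_set T)" by (simp add: weights_def g_def T_def)
  have pg: "pair I d l (g (a,x,y)) = l (tgt a, y) - l (src a, x)" if "(a,x,y) \<in> T" for a x y l
  proof -
    have "(tgt a, y) \<in> idx I d" "(src a, x) \<in> idx I d" using that st by (auto simp: T_def idx_def)
    thus ?thesis using pair_diff[OF fI] by (simp add: g_def)
  qed
  define Sf where "Sf = {(a, x, y). a \<in> E \<and> f (src a) < x \<and> x \<le> d (src a) \<and> 1 \<le> y \<and> y \<le> f (tgt a)}"
  define Se where "Se = {(a, x, y). a \<in> E \<and> e (src a) < x \<and> x \<le> d (src a) \<and> 1 \<le> y \<and> y \<le> e (tgt a)}"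
  have SfT: "Sf \<subseteq> T" and SeT: "Se \<subseteq> T" using d by (auto simp: Sf_def Se_def T_def)
  have fSf: "finite Sf" and fSe: "finite Se" using SfT SeT fT finite_subset by auto
  have Nf: "weights_neg I E src tgt d (lam f x2 y2) = image_mset g (mset_set Sf)"
  proof -
    have key: "(a,x,y) \<in> {t\<in>T. pair I d (lam f x2 y2) (g t) < 0} \<longleftrightarrow> (a,x,y) \<in> Sf" for a x y
    proof (cases "(a,x,y) \<in> T")
      case True
      have "pair I d (lam f x2 y2) (g (a,x,y)) < 0 \<longleftrightarrow> y \<le> f (tgt a) \<and> f (src a) < x"
        unfolding pg[OF True] by (simp only: lam_neg[OF xy2])
      then show ?thesis using True d by (auto simp: T_def Sf_def)
    next
      case False
      then show ?thesis using SfT by auto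
    qed
    have "{t\<in>T. pair I d (lam f x2 y2) (g t) < 0} = Sf"
    proof (rule set_eqI)
      fix t :: "'e \<times> nat \<times> nat"
      obtain a x y where te: "t = (a,x,y)" by (cases t) auto
      show "t \<in> {t\<in>T. pair I d (lam f x2 y2) (g t) < 0} \<longleftrightarrow> t \<in> Sf" unfolding te by (rule key)
    qed
    thus ?thesis unfolding weights_neg_def W filter_mset_image_mset using fT by simp
  qed
  have Ne: "weights_neg I E src tgt d (lam e x1 y1) = image_mset g (mset_set Se)"
  proof -
    have key: "(a,x,y) \<in> {t\<in>T. pair I d (lam e x1 y1) (g t) < 0} \<longleftrightarrow> (a,x,y) \<in> Se" for a x y
    proof (cases "(a,x,y) \<in> T")
      case True
      have "pair I d (lam e x1 y1) (g (a,x,y)) < 0 \<longleftrightarrow> y \<le> e (tgt a) \<and> e (src a) < x"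
        unfolding pg[OF True] by (simp only: lam_neg[OF xy1])
      then show ?thesis using True d by (auto simp: T_def Se_def)
    next
      case False
      then show ?thesis using SeT by auto
    qed
    have "{t\<in>T. pair I d (lam e x1 y1) (g t) < 0} = Se"
    proof (rule set_eqI)
      fix t :: "'e \<times> nat \<times> nat"
      obtain a x y where te: "t = (a,x,y)" by (cases t) auto
      show "t \<in> {t\<in>T. pair I d (lam e x1 y1) (g t) < 0} \<longleftrightarrow> t \<in> Se" unfolding te by (rule key)
    qed
    thus ?thesis unfolding weights_neg_def W filter_mset_image_mset using fT by simp
  qed
  define hg where "hg = (\<lambda>(a::'e, x::nat, y::nat). (\<lambda>q. beta (src a) (x - f (src a)) q - beta (tgt a) (y + e (tgt a)) q))"
  have L: "image_mset (\<lambda>b. (\<lambda>q. - weyl_act I d (wef f e) b q)) (image_mset g (mset_set Sf)) = image_mset hg (mset_set Sf)"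
    unfolding multiset.map_comp
  proof (rule image_mset_cong)
    fix t assume "t \<in># mset_set Sf"
    hence t: "t \<in> Sf" using fSf by simp
    obtain a x y where te: "t = (a,x,y)" by (cases t) auto
    have i1: "(tgt a, y) \<in> idx I d" "(src a, x) \<in> idx I d" using t SfT st unfolding te by (auto simp: T_def idx_def)
    have w1: "wef f e (tgt a) y = y + e (tgt a)" "wef f e (src a) x = x - f (src a)"
      using t d unfolding te by (auto simp: Sf_def wef_def)
    show "((\<lambda>b q. - weyl_act I d (wef f e) b q) \<circ> g) t = hg t"
      unfolding te comp_def
      by (rule ext) (simp add: g_def hg_def weyl_diff[OF fI i1] w1)
  qed
  define Ep where "Ep i j = {a\<in>E. src a = i \<and> tgt a = j}" for i j
  have "\<exists>h. bij_betw h (Ep i j) (Ep j i)" for i j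
  proof (cases "i \<in> I \<and> j \<in> I")
    case True
    have "card (Ep i j) = card (Ep j i)" using sq True by (auto simp: symmetric_quiver_def Ep_def)
    moreover have "finite (Ep i j)" "finite (Ep j i)" using fE by (auto simp: Ep_def)
    ultimately show ?thesis using finite_same_card_bij by blast
  next
    case False
    hence "Ep i j = {}" "Ep j i = {}" using st by (auto simp: Ep_def)
    thus ?thesis by (intro exI[of _ id]) simp
  qed
  then obtain H where H: "\<And>i j. bij_betw (H i j) (Ep i j) (Ep j i)" by metis
  define phi where "phi a = H (src a) (tgt a) a" for a
  have phi1: "phi a \<in> E \<and> src (phi a) = tgt a \<and> tgt (phi a) = src a" if "a \<in> E" for a
  proof -
    have "a \<in> Ep (src a) (tgt a)" using that by (simp add: Ep_def)
    hence "phi a \<in> Ep (tgt a) (src a)" unfolding phi_def using H bij_betw_apply by metis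
    thus ?thesis by (simp add: Ep_def)
  qed
  have phiinj: "a = a'" if "a \<in> E" "a' \<in> E" "phi a = phi a'" for a a'
  proof -
    have "src a = src a'" "tgt a = tgt a'" using phi1[OF that(1)] phi1[OF that(2)] that(3) by metis+
    hence "a \<in> Ep (src a) (tgt a)" "a' \<in> Ep (src a) (tgt a)" using that by (auto simp: Ep_def)
    moreover have "H (src a) (tgt a) a = H (src a) (tgt a) a'" using that(3) \<open>src a = src a'\<close> \<open>tgt a = tgt a'\<close>
      by (simp add: phi_def)
    ultimately show ?thesis using H bij_betw_imp_inj_on inj_onD by metis
  qed
  have phisurj: "\<exists>a\<in>E. phi a = b" if "b \<in> E" for b
  proof -
    have "b \<in> Ep (src b) (tgt b)" using that by (simp add: Ep_def)
    hence "b \<in> H (tgt b) (src b) ` Ep (tgt b) (src b)" using H bij_betw_imp_surj_on by metis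
    then obtain a where a: "a \<in> Ep (tgt b) (src b)" "H (tgt b) (src b) a = b" by auto
    hence "phi a = b" by (simp add: phi_def Ep_def)
    thus ?thesis using a by (auto simp: Ep_def)
  qed
  define th where "th = (\<lambda>(a::'e, x::nat, y::nat). (phi a, y + f (tgt a), x - e (src a)))"
  have inj: "inj_on th Se"
  proof (rule inj_onI)
    fix t t' assume t: "t \<in> Se" and t': "t' \<in> Se" and eq: "th t = th t'"
    obtain a x y where te: "t = (a,x,y)" by (cases t) auto
    obtain a' x' y' where te': "t' = (a',x',y')" by (cases t') auto
    have "phi a = phi a'" using eq unfolding te te' by (simp add: th_def)
    moreover have "a \<in> E" "a' \<in> E" using t t' unfolding te te' by (simp_all add: Se_def)
    ultimately have "a = a'" using phiinj by blast
    thus "t = t'" using t t' eq unfolding te te' by (auto simp: Se_def th_def)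
  qed
  have img: "th ` Se = Sf"
  proof (intro set_eqI iffI)
    fix t assume "t \<in> th ` Se"
    then obtain a x y where t: "(a,x,y) \<in> Se" "t = th (a,x,y)" by auto
    show "t \<in> Sf" using t phi1[of a] d by (auto simp: Se_def Sf_def th_def)
  next
    fix t assume t: "t \<in> Sf"
    obtain b x y where te: "t = (b,x,y)" by (cases t) auto
    have bE: "b \<in> E" using t te by (simp add: Sf_def)
    then obtain a where a: "a \<in> E" "phi a = b" using phisurj by blast
    have ph: "src b = tgt a" "tgt b = src a" using phi1[OF a(1)] a(2) by auto
    have "(a, y + e (src a), x - f (tgt a)) \<in> Se" using t a ph d unfolding te by (auto simp: Se_def Sf_def)
    moreover have "th (a, y + e (src a), x - f (tgt a)) = t" using t a ph d unfolding te by (auto simp: Sf_def th_def)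
    ultimately show "t \<in> th ` Se" by (metis image_eqI)
  qed
  have "image_mset g (mset_set Se) = image_mset (hg \<circ> th) (mset_set Se)"
  proof (rule image_mset_cong)
    fix t assume "t \<in># mset_set Se"
    hence t: "t \<in> Se" using fSe by simp
    obtain a x y where te: "t = (a,x,y)" by (cases t) auto
    have ph: "src (phi a) = tgt a" "tgt (phi a) = src a" using phi1 t unfolding te by (auto simp: Se_def)
    show "g t = (hg \<circ> th) t" using t unfolding te by (auto simp: g_def hg_def th_def ph Se_def)
  qed
  also have "\<dots> = image_mset hg (image_mset th (mset_set Se))" by (simp add: multiset.map_comp)
  also have "\<dots> = image_mset hg (mset_set Sf)" by (simp add: image_mset_mset_set[OF inj] img)
  finally show ?thesis unfolding Nf Ne L by simp
qed

theorem proposition4p4: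
  fixes I :: "'i set" and E :: "'e set" and src tgt :: "'e \<Rightarrow> 'i"
    and e f d :: "'i \<Rightarrow> nat" and x1 y1 x2 y2 :: real
  assumes "symmetric_quiver I E src tgt"
    and "d = (\<lambda>a. e a + f a)"
    and "x1 < y1" and "(\<Sum>a\<in>I. real (e a) * x1 + real (f a) * y1) = 0"
    and "x2 < y2" and "(\<Sum>a\<in>I. real (f a) * x2 + real (e a) * y2) = 0"
  shows "(\<lambda>q. weyl_act I d (wef e f) (rho I d) q - rho I d q)
           = (\<lambda>q. - 2 * rho_part I d (lam f x2 y2) q)
     \<and> image_mset (\<lambda>b. (\<lambda>q. - weyl_act I d (wef f e) b q)) (weights_neg I E src tgt d (lam f x2 y2))
           = weights_neg I E src tgt d (lam e x1 y1)"
proof -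
  have fI: "finite I" using assms(1) by (simp add: symmetric_quiver_def)
  show ?thesis using part_a[OF fI assms(5,2)] part_b[OF assms(1,2,3,5)] by simp
qed

end
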